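(* Let $\mathcal{X}=\{1,\dots,n\}$, let $\pi$ be a strictly positive probability distribution on $\mathcal{X}$ ordered so that $\pi(1)\le\pi(2)\le\dots\le\pi(n)$, let $P$ be a transition matrix with $\pi P=\pi$, let $2\le k\le n$, and let $\alpha\in[0,1)$. For a partition $(\mathcal{O}_i)_{i=1}^k$ of $\mathcal{X}$ into $k$ nonempty proper subsets, let $G$ be its Gibbs kernel, $\overline{\pi}=(\pi(\mathcal{O}_1),\dots,\pi(\mathcal{O}_k))$, and $Q_\alpha$, $\widetilde{\pi}_\alpha$, $\widetilde{\Pi}_\alpha$ as defined below. Then, as functions of the partition, $$\operatorname*{argmin}\mathrm{KL}_{\widetilde{\pi}_\alpha}(Q_\alpha\|\widetilde{\Pi}_\alpha)=\operatorname*{argmin}\mathrm{KL}_\pi(G\|\Pi)=\operatorname*{argmin}H(\overline{\pi}),$$ and the minimum is attained by the partition $\mathcal{O}_i=\{i\}$ for $1\le i\le k-1$ and $\mathcal{O}_k=\{k,k+1,\dots,n\}$.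
   Context: Gibbs kernel: $G(x,y)=\pi(y)/\pi(\mathcal{O}(x))$ if $y\in\mathcal{O}(x)$ and $0$ otherwise, $\mathcal{O}(x)$ the block containing $x$, $\pi(\mathcal{O})=\sum_{z\in\mathcal{O}}\pi(z)$. $\Pi$ is the matrix with every row equal to $\pi$. With $R(+1)=1-\alpha$, $R(-1)=\alpha$: $Q_\alpha$ is the transition matrix on $\mathcal{X}\times\{-1,+1\}$ with $Q_\alpha((x,i),(y,+1))=(1-\alpha)G(x,y)$, $Q_\alpha((x,i),(y,-1))=\alpha P(x,y)$; $\widetilde{\pi}_\alpha(x,i)=\pi(x)R(i)$; $\widetilde{\Pi}_\alpha$ has every row equal to $\widetilde{\pi}_\alpha$. $\mathrm{KL}_\mu(P\|Q)=\sum_{x,y}\mu(x)P(x,y)\log\frac{P(x,y)}{Q(x,y)}$ with $0\log(0/a)=0$; $H(\mu)=-\sum_i\mu(i)\log\mu(i)$. *)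

theory Defs
  imports Complex_Main
begin

definition is_partition_k :: "nat \<Rightarrow> nat \<Rightarrow> nat set set \<Rightarrow> bool" where
  "is_partition_k n k B \<longleftrightarrow>
     (\<forall>C\<in>B. C \<noteq> {} \<and> C \<subset> {1..n}) \<and>
     (\<forall>C1\<in>B. \<forall>C2\<in>B. C1 \<noteq> C2 \<longrightarrow> C1 \<inter> C2 = {}) \<and>
     \<Union>B = {1..n} \<and> finite B \<and> card B = k"

definition block_of :: "nat set set \<Rightarrow> nat \<Rightarrow> nat set" where
  "block_of B x = (THE C. C \<in> B \<and> x \<in> C)"

definition pmass :: "(nat \<Rightarrow> real) \<Rightarrow> nat set \<Rightarrow> real" where
  "pmass \<pi> C = (\<Sum>z\<in>C. \<pi> z)"

definition gibbs :: "(nat \<Rightarrow> real) \<Rightarrow> nat set set \<Rightarrow> nat \<Rightarrow> nat \<Rightarrow> real" where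
  "gibbs \<pi> B x y = (if y \<in> block_of B x then \<pi> y / pmass \<pi> (block_of B x) else 0)"

definition rowmat :: "('s \<Rightarrow> real) \<Rightarrow> 's \<Rightarrow> 's \<Rightarrow> real" where
  "rowmat \<mu> x y = \<mu> y"

definition KL :: "'s set \<Rightarrow> ('s \<Rightarrow> real) \<Rightarrow> ('s \<Rightarrow> 's \<Rightarrow> real) \<Rightarrow> ('s \<Rightarrow> 's \<Rightarrow> real) \<Rightarrow> real" where
  "KL S \<mu> P Q = (\<Sum>x\<in>S. \<Sum>y\<in>S.
      (if P x y = 0 then 0 else \<mu> x * P x y * ln (P x y / Q x y)))"

definition entropy :: "'i set \<Rightarrow> ('i \<Rightarrow> real) \<Rightarrow> real" where
  "entropy I \<mu> = - (\<Sum>i\<in>I. (if \<mu> i = 0 then 0 else \<mu> i * ln (\<mu> i)))"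

definition lifted_space :: "nat \<Rightarrow> (nat \<times> int) set" where
  "lifted_space n = {1..n} \<times> {-1, 1}"

definition Rw :: "real \<Rightarrow> int \<Rightarrow> real" where
  "Rw \<alpha> i = (if i = 1 then 1 - \<alpha> else \<alpha>)"

definition Qalpha :: "real \<Rightarrow> (nat \<Rightarrow> real) \<Rightarrow> (nat \<Rightarrow> nat \<Rightarrow> real) \<Rightarrow> nat set set
     \<Rightarrow> nat \<times> int \<Rightarrow> nat \<times> int \<Rightarrow> real" where
  "Qalpha \<alpha> \<pi> P B xi yj =
     (if snd yj = 1 then (1 - \<alpha>) * gibbs \<pi> B (fst xi) (fst yj)
      else \<alpha> * P (fst xi) (fst yj))"

definition pitilde :: "real \<Rightarrow> (nat \<Rightarrow> real) \<Rightarrow> nat \<times> int \<Rightarrow> real" where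
  "pitilde \<alpha> \<pi> xi = \<pi> (fst xi) * Rw \<alpha> (snd xi)"

definition argmin_part :: "nat \<Rightarrow> nat \<Rightarrow> (nat set set \<Rightarrow> real) \<Rightarrow> nat set set set" where
  "argmin_part n k f = {B. is_partition_k n k B \<and>
       (\<forall>B'. is_partition_k n k B' \<longrightarrow> f B \<le> f B')}"

end

theory Submission
  imports Defs
begin


lemma tangent:
  fixes x y :: real assumes "x > 0" "y > 0"
  shows "-(y*ln y) \<le> -(x*ln x) + (-ln x - 1)*(y - x)"
proof -
  have "ln (x/y) \<le> x/y - 1" using assms by (intro ln_le_minus_one) simp
  hence "y * ln (x/y) \<le> y * (x/y - 1)" using assms by (intro mult_left_mono) auto
  moreover have "y * ln (x/y) = y * ln x - y * ln y" using assms by (simp add: ln_div algebra_simps)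
  moreover have "y * (x/y - 1) = x - y" using assms by (simp add: field_simps)
  ultimately have "y * ln x - y * ln y \<le> x - y" by simp
  thus ?thesis by (simp add: algebra_simps)
qed

lemma rank_bij:
  fixes A :: "nat set"
  shows "finite A \<Longrightarrow> A \<subseteq> {1..} \<Longrightarrow> \<exists>\<sigma>. bij_betw \<sigma> A {1..card A} \<and> (\<forall>a\<in>A. \<sigma> a \<le> a)"
proof (induct "card A" arbitrary: A)
  case 0
  then show ?case by (auto intro!: exI[of _ id] simp: bij_betw_def)
next
  case (Suc m)
  define a where "a = Max A"
  have ne: "A \<noteq> {}" using Suc by auto
  have aA: "a \<in> A" using Suc ne a_def by auto
  define A' where "A' = A - {a}"
  have cA': "card A' = m" using Suc aA A'_def by auto
  obtain \<sigma> where s: "bij_betw \<sigma> A' {1..m}" "\<forall>a\<in>A'. \<sigma> a \<le> a"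
    using Suc(1)[of A'] cA' Suc A'_def by auto
  define \<tau> where "\<tau> = \<sigma>(a := Suc m)"
  have "bij_betw \<tau> A' {1..m}" using s(1) unfolding \<tau>_def
    by (rule bij_betw_cong[THEN iffD1, rotated]) (auto simp: A'_def)
  hence "bij_betw \<tau> (A' \<union> {a}) ({1..m} \<union> {\<tau> a})"
    by (intro notIn_Un_bij_betw) (auto simp: A'_def \<tau>_def)
  moreover have "A' \<union> {a} = A" using aA A'_def by auto
  moreover have "{1..m} \<union> {\<tau> a} = {1..card A}" using Suc(2) by (auto simp: \<tau>_def)
  moreover have "\<forall>b\<in>A. \<tau> b \<le> b"
  proof
    fix b assume b: "b \<in> A"
    show "\<tau> b \<le> b"
    proof (cases "b = a")
      case True
      have "A \<subseteq> {1..a}" using Suc a_def by (auto intro: Max_ge)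
      hence "card A \<le> card {1..a}" by (intro card_mono) auto
      then show ?thesis using True Suc(2) by (simp add: \<tau>_def)
    next
      case False thus ?thesis using s(2) b by (auto simp: \<tau>_def A'_def)
    qed
  qed
  ultimately show ?case by metis
qed



lemma part_facts:
  assumes "is_partition_k n k B"
  shows "finite B" "\<And>C. C \<in> B \<Longrightarrow> C \<noteq> {} \<and> C \<subseteq> {1..n} \<and> finite C"
    "\<And>C D. C \<in> B \<Longrightarrow> D \<in> B \<Longrightarrow> C \<noteq> D \<Longrightarrow> C \<inter> D = {}" "\<Union>B = {1..n}" "card B = k"
  using assms unfolding is_partition_k_def by (auto intro: finite_subset)

lemma block_of_eq:
  assumes "is_partition_k n k B" "C \<in> B" "x \<in> C"
  shows "block_of B x = C"
  unfolding block_of_def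
  using part_facts(3)[OF assms(1)] assms(2,3) by (intro the_equality) auto

lemma block_of_mem:
  assumes "is_partition_k n k B" "x \<in> {1..n}"
  shows "block_of B x \<in> B \<and> x \<in> block_of B x"
proof -
  obtain C where "C \<in> B" "x \<in> C" using part_facts(4)[OF assms(1)] assms(2) by blast
  thus ?thesis using block_of_eq[OF assms(1)] by auto
qed

lemma sum_partition:
  assumes "is_partition_k n k B"
  shows "(\<Sum>x\<in>{1..n}. f x) = (\<Sum>C\<in>B. \<Sum>x\<in>C. f x)"
proof -
  have "(\<Sum>x\<in>\<Union>B. f x) = (\<Sum>C\<in>B. \<Sum>x\<in>C. f x)"
    using part_facts[OF assms] by (subst sum.Union_disjoint) auto
  thus ?thesis using part_facts(4)[OF assms] by simp
qed

lemma pmass_pos: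
  assumes "is_partition_k n k B" "C \<in> B" "\<forall>x\<in>{1..n}. \<pi> x > 0"
  shows "pmass \<pi> C > 0"
  unfolding pmass_def using part_facts(2)[OF assms(1,2)] assms(3)
  by (intro sum_pos) auto

lemma KL_gibbs:
  assumes P: "is_partition_k n k B" and pos: "\<forall>x\<in>{1..n}. \<pi> x > 0"
  shows "KL {1..n} \<pi> (gibbs \<pi> B) (rowmat \<pi>) = entropy B (pmass \<pi>)"
proof -
  have inner: "(\<Sum>y\<in>{1..n}. (if gibbs \<pi> B x y = 0 then 0 else
        \<pi> x * gibbs \<pi> B x y * ln (gibbs \<pi> B x y / rowmat \<pi> x y)))
      = \<pi> x * (- ln (pmass \<pi> (block_of B x)))" if x: "x \<in> {1..n}" for x
  proof -
    define C where "C = block_of B x"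
    have C: "C \<in> B" "x \<in> C" using block_of_mem[OF P x] C_def by auto
    have CB: "C \<subseteq> {1..n}" "finite C" using part_facts(2)[OF P C(1)] by auto
    have mC: "pmass \<pi> C > 0" using pmass_pos[OF P C(1) pos] .
    have "(\<Sum>y\<in>{1..n}. (if gibbs \<pi> B x y = 0 then 0 else
        \<pi> x * gibbs \<pi> B x y * ln (gibbs \<pi> B x y / rowmat \<pi> x y)))
      = (\<Sum>y\<in>{1..n}. (if y \<in> C then \<pi> x * (\<pi> y / pmass \<pi> C) * (- ln (pmass \<pi> C)) else 0))"
    proof (rule sum.cong[OF refl])
      fix y assume y: "y \<in> {1..n}"
      have py: "\<pi> y > 0" using pos y by auto
      show "(if gibbs \<pi> B x y = 0 then 0 else
        \<pi> x * gibbs \<pi> B x y * ln (gibbs \<pi> B x y / rowmat \<pi> x y))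
        = (if y \<in> C then \<pi> x * (\<pi> y / pmass \<pi> C) * (- ln (pmass \<pi> C)) else 0)"
        using py mC by (auto simp: gibbs_def rowmat_def C_def[symmetric] ln_div)
    qed
    also have "\<dots> = (\<Sum>y\<in>C. \<pi> x * (\<pi> y / pmass \<pi> C) * (- ln (pmass \<pi> C)))"
      using CB sum.inter_restrict[of "{1..n}" "\<lambda>y. \<pi> x * (\<pi> y / pmass \<pi> C) * (- ln (pmass \<pi> C))" C]
      by (simp only: finite_atLeastAtMost Int_absorb1)
    also have "\<dots> = \<pi> x * (pmass \<pi> C / pmass \<pi> C) * (- ln (pmass \<pi> C))"
    proof -
      have "(\<Sum>y\<in>C. \<pi> x * (\<pi> y / pmass \<pi> C) * (- ln (pmass \<pi> C)))
          = (\<Sum>y\<in>C. (\<pi> x / pmass \<pi> C * (- ln (pmass \<pi> C))) * \<pi> y)"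
        by (rule sum.cong) auto
      also have "\<dots> = (\<pi> x / pmass \<pi> C * (- ln (pmass \<pi> C))) * pmass \<pi> C"
        unfolding pmass_def by (rule sum_distrib_left[symmetric])
      finally show ?thesis by simp
    qed
    also have "\<dots> = \<pi> x * (- ln (pmass \<pi> C))" using mC by simp
    finally show ?thesis by (simp add: C_def)
  qed
  have "KL {1..n} \<pi> (gibbs \<pi> B) (rowmat \<pi>) = (\<Sum>x\<in>{1..n}. \<pi> x * (- ln (pmass \<pi> (block_of B x))))"
    unfolding KL_def using inner by (intro sum.cong) auto
  also have "\<dots> = (\<Sum>C\<in>B. \<Sum>x\<in>C. \<pi> x * (- ln (pmass \<pi> (block_of B x))))"
    by (rule sum_partition[OF P])
  also have "\<dots> = (\<Sum>C\<in>B. - (pmass \<pi> C * ln (pmass \<pi> C)))"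
  proof (rule sum.cong[OF refl])
    fix C assume C: "C \<in> B"
    have "(\<Sum>x\<in>C. \<pi> x * (- ln (pmass \<pi> (block_of B x)))) = (\<Sum>x\<in>C. \<pi> x * (- ln (pmass \<pi> C)))"
      using block_of_eq[OF P C] by simp
    also have "\<dots> = - (pmass \<pi> C * ln (pmass \<pi> C))" unfolding pmass_def
      by (subst sum_distrib_right[symmetric]) simp
    finally show "(\<Sum>x\<in>C. \<pi> x * (- ln (pmass \<pi> (block_of B x)))) = - (pmass \<pi> C * ln (pmass \<pi> C))" .
  qed
  also have "\<dots> = entropy B (pmass \<pi>)"
    unfolding entropy_def using pmass_pos[OF P _ pos] by (simp add: sum_negf) (rule sum.cong, auto)
  finally show ?thesis .
qed



definition tG :: "(nat \<Rightarrow> nat \<Rightarrow> real) \<Rightarrow> (nat \<Rightarrow> real) \<Rightarrow> nat \<Rightarrow> nat \<Rightarrow> real" where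
  "tG Q \<pi> x y = (if Q x y = 0 then 0 else \<pi> x * Q x y * ln (Q x y / rowmat \<pi> x y))"

lemma term_lift:
  assumes "\<alpha> < 1" "j \<in> {-1, 1::int}"
  shows "(if Qalpha \<alpha> \<pi> P B (x,i) (y,j) = 0 then 0 else
           pitilde \<alpha> \<pi> (x,i) * Qalpha \<alpha> \<pi> P B (x,i) (y,j) *
           ln (Qalpha \<alpha> \<pi> P B (x,i) (y,j) / rowmat (pitilde \<alpha> \<pi>) (x,i) (y,j)))
       = Rw \<alpha> i * (if j = 1 then (1 - \<alpha>) * tG (gibbs \<pi> B) \<pi> x y else \<alpha> * tG P \<pi> x y)"
proof (cases "j = 1")
  case True
  have a: "1 - \<alpha> \<noteq> 0" using assms by simp
  have "(1 - \<alpha>) * gibbs \<pi> B x y / (\<pi> y * (1 - \<alpha>)) = gibbs \<pi> B x y / \<pi> y" using a by simp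
  then show ?thesis using True a
    by (auto simp: Qalpha_def tG_def pitilde_def rowmat_def Rw_def)
next
  case False
  hence j: "j = -1" using assms by auto
  show ?thesis
  proof (cases "\<alpha> = 0")
    case True thus ?thesis using j by (auto simp: Qalpha_def tG_def pitilde_def rowmat_def Rw_def)
  next
    case False
    have "\<alpha> * P x y / (\<pi> y * \<alpha>) = P x y / \<pi> y" using False by simp
    then show ?thesis using j False
      by (auto simp: Qalpha_def tG_def pitilde_def rowmat_def Rw_def)
  qed
qed

lemma KL_lifted:
  assumes "\<alpha> < 1"
  shows "KL (lifted_space n) (pitilde \<alpha> \<pi>) (Qalpha \<alpha> \<pi> P B) (rowmat (pitilde \<alpha> \<pi>))
     = (1 - \<alpha>) * KL {1..n} \<pi> (gibbs \<pi> B) (rowmat \<pi>) + \<alpha> * KL {1..n} \<pi> P (rowmat \<pi>)"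
proof -
  define cG where "cG x = (\<Sum>y\<in>{1..n}. tG (gibbs \<pi> B) \<pi> x y)" for x
  define cP where "cP x = (\<Sum>y\<in>{1..n}. tG P \<pi> x y)" for x
  have inner: "(\<Sum>yj\<in>lifted_space n. (if Qalpha \<alpha> \<pi> P B (x,i) yj = 0 then 0 else
           pitilde \<alpha> \<pi> (x,i) * Qalpha \<alpha> \<pi> P B (x,i) yj *
           ln (Qalpha \<alpha> \<pi> P B (x,i) yj / rowmat (pitilde \<alpha> \<pi>) (x,i) yj)))
      = Rw \<alpha> i * ((1 - \<alpha>) * cG x + \<alpha> * cP x)" for x i
  proof -
    have "(\<Sum>yj\<in>lifted_space n. (if Qalpha \<alpha> \<pi> P B (x,i) yj = 0 then 0 else
           pitilde \<alpha> \<pi> (x,i) * Qalpha \<alpha> \<pi> P B (x,i) yj *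
           ln (Qalpha \<alpha> \<pi> P B (x,i) yj / rowmat (pitilde \<alpha> \<pi>) (x,i) yj)))
       = (\<Sum>y\<in>{1..n}. \<Sum>j\<in>{-1,1::int}. Rw \<alpha> i * (if j = 1 then (1 - \<alpha>) * tG (gibbs \<pi> B) \<pi> x y else \<alpha> * tG P \<pi> x y))"
      unfolding lifted_space_def sum.cartesian_product'
      by (intro sum.cong refl) (simp only: term_lift[OF assms])
    also have "\<dots> = (\<Sum>y\<in>{1..n}. Rw \<alpha> i * ((1 - \<alpha>) * tG (gibbs \<pi> B) \<pi> x y + \<alpha> * tG P \<pi> x y))"
      by (simp add: algebra_simps)
    also have "\<dots> = Rw \<alpha> i * ((1 - \<alpha>) * cG x + \<alpha> * cP x)"
      unfolding cG_def cP_def by (simp only: sum.distrib sum_distrib_left distrib_left)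
    finally show ?thesis .
  qed
  have "KL (lifted_space n) (pitilde \<alpha> \<pi>) (Qalpha \<alpha> \<pi> P B) (rowmat (pitilde \<alpha> \<pi>))
      = (\<Sum>x\<in>{1..n}. \<Sum>i\<in>{-1,1::int}. Rw \<alpha> i * ((1 - \<alpha>) * cG x + \<alpha> * cP x))"
    unfolding KL_def using inner
    by (simp add: lifted_space_def sum.cartesian_product')
  also have "\<dots> = (\<Sum>x\<in>{1..n}. (1 - \<alpha>) * cG x + \<alpha> * cP x)"
    by (simp add: Rw_def algebra_simps)
  also have "\<dots> = (1 - \<alpha>) * KL {1..n} \<pi> (gibbs \<pi> B) (rowmat \<pi>) + \<alpha> * KL {1..n} \<pi> P (rowmat \<pi>)"
    unfolding KL_def cG_def cP_def tG_def by (simp add: sum.distrib sum_distrib_left)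
  finally show ?thesis .
qed

lemma argmin_cong:
  assumes "\<And>B. is_partition_k n k B \<Longrightarrow> g B = a * f B + c" "a > 0"
  shows "argmin_part n k g = argmin_part n k f"
  unfolding argmin_part_def using assms by auto



definition hh :: "real \<Rightarrow> real" where "hh t = - (t * ln t)"

lemma entropy_hh:
  assumes "\<And>C. C \<in> B \<Longrightarrow> pmass \<pi> C > 0"
  shows "entropy B (pmass \<pi>) = (\<Sum>C\<in>B. hh (pmass \<pi> C))"
  unfolding entropy_def hh_def using assms by (simp add: sum_negf) (rule sum.cong, auto)

definition B0 :: "nat \<Rightarrow> nat \<Rightarrow> nat set set" where
  "B0 n k = (\<lambda>i. {i}) ` {1..k-1} \<union> {{k..n}}"

lemma B0_partition:
  assumes "2 \<le> k" "k \<le> n"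
  shows "is_partition_k n k (B0 n k)"
proof -
  define S1 where "S1 = (\<lambda>i. {i}) ` {1..k-1}"
  have B0e: "B0 n k = insert {k..n} S1" unfolding B0_def S1_def by auto
  have c: "card S1 = k - 1" unfolding S1_def
    by (subst card_image) (auto simp: inj_on_def)
  have nin: "{k..n} \<notin> S1"
  proof
    assume "{k..n} \<in> S1"
    then obtain i where i: "i \<in> {1..k-1}" "{k..n} = {i}" unfolding S1_def by auto
    have "k \<in> {k..n}" using assms by simp
    hence "k = i" using i(2) by blast
    thus False using i(1) assms by simp
  qed
  have fS: "finite S1" unfolding S1_def by simp
  have card: "card (B0 n k) = k" unfolding B0e using c nin fS assms by simp
  have US: "\<Union>S1 = {1..k-1}" unfolding S1_def by auto
  have un: "\<Union>(B0 n k) = {1..n}" unfolding B0e using US assms by auto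
  have ns: "{i} \<noteq> {1..n}" for i
  proof
    assume e: "{i} = {1..n}"
    have "(1::nat) \<in> {1..n}" "(2::nat) \<in> {1..n}" using assms by auto
    hence "(1::nat) \<in> {i}" "(2::nat) \<in> {i}" unfolding e by blast+
    thus False by simp
  qed
  have pr: "\<forall>C\<in>B0 n k. C \<noteq> {} \<and> C \<subset> {1..n}"
  proof
    fix C assume "C \<in> B0 n k"
    then consider i where "i \<in> {1..k-1}" "C = {i}" | "C = {k..n}" unfolding B0e S1_def by auto
    thus "C \<noteq> {} \<and> C \<subset> {1..n}"
    proof cases
      case 1 thus ?thesis using ns[of i] assms by auto
    next
      case 2
      have "1 \<notin> C" using 2 assms by auto
      moreover have "C \<subseteq> {1..n}" using 2 assms by auto
      moreover have "C \<noteq> {}" using 2 assms by auto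
      moreover have "1 \<in> {1..n}" using assms by auto
      ultimately show ?thesis by blast
    qed
  qed
  have dj: "\<forall>C1\<in>B0 n k. \<forall>C2\<in>B0 n k. C1 \<noteq> C2 \<longrightarrow> C1 \<inter> C2 = {}"
    unfolding B0e S1_def by auto
  have "finite (B0 n k)" unfolding B0e using fS by simp
  thus ?thesis unfolding is_partition_k_def using card un pr dj by blast
qed

lemma entropy_B0:
  assumes "2 \<le> k" "k \<le> n" "\<forall>x\<in>{1..n}. \<pi> x > 0"
  shows "entropy (B0 n k) (pmass \<pi>) = (\<Sum>i\<in>{1..k-1}. hh (\<pi> i)) + hh (pmass \<pi> {k..n})"
proof -
  have P: "is_partition_k n k (B0 n k)" using B0_partition assms by auto
  have "entropy (B0 n k) (pmass \<pi>) = (\<Sum>C\<in>B0 n k. hh (pmass \<pi> C))"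
    using entropy_hh pmass_pos[OF P _ assms(3)] by blast
  also have "\<dots> = (\<Sum>C\<in>(\<lambda>i. {i}) ` {1..k-1}. hh (pmass \<pi> C)) + hh (pmass \<pi> {k..n})"
    unfolding B0_def using assms by (subst sum.union_disjoint) auto
  also have "(\<Sum>C\<in>(\<lambda>i. {i}) ` {1..k-1}. hh (pmass \<pi> C)) = (\<Sum>i\<in>{1..k-1}. hh (\<pi> i))"
    by (subst sum.reindex) (auto simp: inj_on_def pmass_def)
  finally show ?thesis .
qed

lemma main_ineq:
  assumes P: "is_partition_k n k B" and k: "2 \<le> k" "k \<le> n"
    and pos: "\<forall>x\<in>{1..n}. \<pi> x > 0"
    and prob: "(\<Sum>x\<in>{1..n}. \<pi> x) = 1"
    and sorted: "\<forall>x\<in>{1..n}. \<forall>y\<in>{1..n}. x \<le> y \<longrightarrow> \<pi> x \<le> \<pi> y"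
  shows "entropy (B0 n k) (pmass \<pi>) \<le> entropy B (pmass \<pi>)"
proof -
  define m where "m C = pmass \<pi> C" for C
  define h' where "h' t = - ln t - 1" for t :: real
  have mpos: "\<And>C. C \<in> B \<Longrightarrow> m C > 0" unfolding m_def using pmass_pos[OF P _ pos] .
  have fB: "finite B" and cB: "card B = k" using part_facts[OF P] by auto
  have neB: "B \<noteq> {}" using cB k by auto
  obtain L where L: "L \<in> B" "\<forall>C\<in>B. m C \<le> m L"
  proof -
    have "Max (m ` B) \<in> m ` B" using fB neB by simp
    then obtain L where "L \<in> B" "m L = Max (m ` B)" by auto
    thus ?thesis using that fB by auto
  qed
  define B' where "B' = B - {L}"
  have fB': "finite B'" and cB': "card B' = k - 1" using fB cB L unfolding B'_def by auto
  have injM: "inj_on Min B'"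
  proof (rule inj_onI)
    fix C D assume C: "C \<in> B'" and D: "D \<in> B'" and e: "Min C = Min D"
    have "C \<noteq> {} \<and> C \<subseteq> {1..n} \<and> finite C" "D \<noteq> {} \<and> D \<subseteq> {1..n} \<and> finite D"
      using part_facts(2)[OF P] C D unfolding B'_def by auto
    hence "Min C \<in> C" "Min D \<in> D" using Min_in by auto
    hence "Min C \<in> C \<inter> D" using e by auto
    thus "C = D" using part_facts(3)[OF P] C D unfolding B'_def by blast
  qed
  have Cfacts: "\<And>C. C \<in> B' \<Longrightarrow> C \<noteq> {} \<and> C \<subseteq> {1..n} \<and> finite C"
    using part_facts(2)[OF P] unfolding B'_def by auto
  define A where "A = Min ` B'"
  have A1: "A \<subseteq> {1..n}" unfolding A_def
  proof
    fix a assume "a \<in> Min ` B'"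
    then obtain C where "C \<in> B'" "a = Min C" by auto
    thus "a \<in> {1..n}" using Cfacts[of C] Min_in[of C] by blast
  qed
  have cA: "card A = k - 1" unfolding A_def using card_image[OF injM] cB' by simp
  obtain \<sigma> where \<sigma>: "bij_betw \<sigma> A {1..card A}" "\<forall>a\<in>A. \<sigma> a \<le> a"
  proof -
    have "A \<subseteq> {1..}" using A1 by auto
    thus ?thesis using rank_bij[of A] finite_subset[OF A1] that by auto
  qed
  define \<tau> where "\<tau> C = \<sigma> (Min C)" for C
  have bt: "bij_betw \<tau> B' {1..k-1}"
  proof -
    have "bij_betw Min B' A" unfolding A_def using injM by (rule inj_on_imp_bij_betw)
    from bij_betw_trans[OF this \<sigma>(1)] show ?thesis using cA by (simp add: \<tau>_def[abs_def] comp_def)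
  qed
  have \<tau>le: "\<pi> (\<tau> C) \<le> m C" and \<tau>pos: "\<pi> (\<tau> C) > 0" if C: "C \<in> B'" for C
  proof -
    have tC: "\<tau> C \<in> {1..k-1}" using bt C by (auto simp: bij_betw_def)
    have mC: "Min C \<in> C" "Min C \<in> A" using Cfacts[OF C] C by (auto simp: A_def)
    have nn: "\<forall>x\<in>C. \<pi> x \<ge> 0" using Cfacts[OF C] pos by (auto simp: less_imp_le subset_iff)
    have "\<tau> C \<le> Min C" using \<sigma>(2) mC by (simp add: \<tau>_def)
    hence "\<pi> (\<tau> C) \<le> \<pi> (Min C)" using sorted tC A1 mC k by auto
    also have "\<pi> (Min C) \<le> m C" unfolding m_def pmass_def
      using Cfacts[OF C] mC nn by (intro member_le_sum) auto
    finally show "\<pi> (\<tau> C) \<le> m C" .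
    show "\<pi> (\<tau> C) > 0" using tC pos k by auto
  qed
  have s1: "(\<Sum>C\<in>B'. \<pi> (\<tau> C)) = (\<Sum>i\<in>{1..k-1}. \<pi> i)"
    using sum.reindex_bij_betw[OF bt] .
  have s2: "(\<Sum>C\<in>B'. hh (\<pi> (\<tau> C))) = (\<Sum>i\<in>{1..k-1}. hh (\<pi> i))"
    using sum.reindex_bij_betw[OF bt] .
  have sumB: "(\<Sum>C\<in>B. m C) = 1" using sum_partition[OF P, of \<pi>] prob by (simp add: m_def pmass_def)
  have sumB2: "(\<Sum>C\<in>B. m C) = m L + (\<Sum>C\<in>B'. m C)"
    unfolding B'_def using fB L by (simp add: sum.remove)
  define M where "M = pmass \<pi> {k..n}"
  have Mval: "M = 1 - (\<Sum>i\<in>{1..k-1}. \<pi> i)"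
  proof -
    have "{1..n} = {1..k-1} \<union> {k..n}" using k by auto
    hence "(\<Sum>x\<in>{1..n}. \<pi> x) = (\<Sum>i\<in>{1..k-1}. \<pi> i) + M"
      unfolding M_def pmass_def by (simp add: sum.union_disjoint)
    thus ?thesis using prob by simp
  qed
  have Mpos: "M > 0" unfolding M_def pmass_def using pos k by (intro sum_pos) auto
  have MmL: "M - m L = (\<Sum>C\<in>B'. m C - \<pi> (\<tau> C))"
    using Mval s1 sumB sumB2 by (simp add: sum_subtractf)
  have eB: "entropy B (pmass \<pi>) = hh (m L) + (\<Sum>C\<in>B'. hh (m C))"
    using entropy_hh[of B \<pi>] mpos unfolding m_def B'_def using fB L
    by (simp add: sum.remove)
  have tan: "hh b \<le> hh a + h' a * (b - a)" if "a > 0" "b > 0" for a b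
    using tangent[OF that] unfolding hh_def h'_def by simp
  have "entropy (B0 n k) (pmass \<pi>) = (\<Sum>C\<in>B'. hh (\<pi> (\<tau> C))) + hh M"
    using entropy_B0[OF k pos] s2 M_def by simp
  also have "\<dots> \<le> (\<Sum>C\<in>B'. hh (m C) + h' (m C) * (\<pi> (\<tau> C) - m C)) + (hh (m L) + h' (m L) * (M - m L))"
    using tan \<tau>pos mpos Mpos L(1) unfolding B'_def by (intro add_mono sum_mono) auto
  also have "\<dots> = hh (m L) + (\<Sum>C\<in>B'. hh (m C)) +
      (\<Sum>C\<in>B'. h' (m C) * (\<pi> (\<tau> C) - m C) + h' (m L) * (m C - \<pi> (\<tau> C)))"
    unfolding MmL by (simp add: sum.distrib sum_distrib_left)
  also have "\<dots> \<le> hh (m L) + (\<Sum>C\<in>B'. hh (m C)) + 0"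
  proof -
    have "(\<Sum>C\<in>B'. h' (m C) * (\<pi> (\<tau> C) - m C) + h' (m L) * (m C - \<pi> (\<tau> C))) \<le> (\<Sum>C\<in>B'. 0)"
    proof (rule sum_mono)
      fix C assume C: "C \<in> B'"
      have CB: "C \<in> B" using C unfolding B'_def by auto
      have "m C \<le> m L" using L(2) CB by auto
      hence "ln (m C) \<le> ln (m L)" using mpos[OF CB] mpos[OF L(1)] by simp
      hence "h' (m C) - h' (m L) \<ge> 0" unfolding h'_def by simp
      moreover have "\<pi> (\<tau> C) - m C \<le> 0" using \<tau>le[OF C] by simp
      ultimately have "(h' (m C) - h' (m L)) * (\<pi> (\<tau> C) - m C) \<le> 0"
        by (rule mult_nonneg_nonpos)
      thus "h' (m C) * (\<pi> (\<tau> C) - m C) + h' (m L) * (m C - \<pi> (\<tau> C)) \<le> 0"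
        by (simp add: algebra_simps)
    qed
    thus ?thesis by simp
  qed
  also have "\<dots> = entropy B (pmass \<pi>)" using eB by simp
  finally show ?thesis .
qed

theorem proposition5p3:
  fixes n k :: nat and \<pi> :: "nat \<Rightarrow> real" and P :: "nat \<Rightarrow> nat \<Rightarrow> real" and \<alpha> :: real
  assumes pos: "\<forall>x\<in>{1..n}. \<pi> x > 0"
    and prob: "(\<Sum>x\<in>{1..n}. \<pi> x) = 1"
    and sorted: "\<forall>x\<in>{1..n}. \<forall>y\<in>{1..n}. x \<le> y \<longrightarrow> \<pi> x \<le> \<pi> y"
    and P_nonneg: "\<forall>x\<in>{1..n}. \<forall>y\<in>{1..n}. P x y \<ge> 0"
    and P_rows: "\<forall>x\<in>{1..n}. (\<Sum>y\<in>{1..n}. P x y) = 1"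
    and stat: "\<forall>y\<in>{1..n}. (\<Sum>x\<in>{1..n}. \<pi> x * P x y) = \<pi> y"
    and k: "2 \<le> k" "k \<le> n"
    and \<alpha>: "0 \<le> \<alpha>" "\<alpha> < 1"
  shows "argmin_part n k (\<lambda>B. KL (lifted_space n) (pitilde \<alpha> \<pi>) (Qalpha \<alpha> \<pi> P B)
              (rowmat (pitilde \<alpha> \<pi>)))
           = argmin_part n k (\<lambda>B. KL {1..n} \<pi> (gibbs \<pi> B) (rowmat \<pi>))
      \<and> argmin_part n k (\<lambda>B. KL {1..n} \<pi> (gibbs \<pi> B) (rowmat \<pi>))
           = argmin_part n k (\<lambda>B. entropy B (pmass \<pi>))
      \<and> (\<lambda>i. {i}) ` {1..k-1} \<union> {{k..n}} \<in> argmin_part n k (\<lambda>B. entropy B (pmass \<pi>))"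
  proof -
  have G: "KL {1..n} \<pi> (gibbs \<pi> B) (rowmat \<pi>) = 1 * entropy B (pmass \<pi>) + 0"
    if "is_partition_k n k B" for B using KL_gibbs[OF that pos] by simp
  have L: "KL (lifted_space n) (pitilde \<alpha> \<pi>) (Qalpha \<alpha> \<pi> P B) (rowmat (pitilde \<alpha> \<pi>))
     = (1 - \<alpha>) * KL {1..n} \<pi> (gibbs \<pi> B) (rowmat \<pi>) + \<alpha> * KL {1..n} \<pi> P (rowmat \<pi>)" for B
    using KL_lifted[OF \<alpha>(2)] .
  have 1: "argmin_part n k (\<lambda>B. KL (lifted_space n) (pitilde \<alpha> \<pi>) (Qalpha \<alpha> \<pi> P B)
              (rowmat (pitilde \<alpha> \<pi>)))
           = argmin_part n k (\<lambda>B. KL {1..n} \<pi> (gibbs \<pi> B) (rowmat \<pi>))"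
    by (rule argmin_cong[OF L]) (use \<alpha> in simp)
  have 2: "argmin_part n k (\<lambda>B. KL {1..n} \<pi> (gibbs \<pi> B) (rowmat \<pi>))
           = argmin_part n k (\<lambda>B. entropy B (pmass \<pi>))"
    by (rule argmin_cong[OF G]) auto
  have e: "(\<lambda>i. {i}) ` {1..k-1} \<union> {{k..n}} = B0 n k" unfolding B0_def ..
  have 3: "B0 n k \<in> argmin_part n k (\<lambda>B. entropy B (pmass \<pi>))"
    unfolding argmin_part_def using B0_partition[OF k] main_ineq[OF _ k pos prob sorted] by blast
  show ?thesis using 1 2 3 unfolding e by blast
qed

end
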